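(* Let $G$ be a torsion-free virtually nilpotent group and let $N \unlhd G$ be a maximal normal finite index nilpotent subgroup. Then every finite conjugacy class of $G$ is contained in $\mathcal{Z}(N)$. Consequently the FC-centre of $G$ equals $\mathcal{Z}(N)$.
   Context: The FC-centre of $G$ is the set of elements of $G$ whose conjugacy class in $G$ is finite. $\mathcal{Z}(N)$ denotes the centre of $N$. *)

theory Defs
  imports "HOL-Algebra.Algebra"
begin

fun lower_central :: "('a, 'b) monoid_scheme \<Rightarrow> 'a set \<Rightarrow> nat \<Rightarrow> 'a set" where
  "lower_central G H 0 = H"
| "lower_central G H (Suc n) =
     generate G {x \<otimes>\<^bsub>G\<^esub> y \<otimes>\<^bsub>G\<^esub> inv\<^bsub>G\<^esub> x \<otimes>\<^bsub>G\<^esub> inv\<^bsub>G\<^esub> y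
                 | x y. x \<in> lower_central G H n \<and> y \<in> H}"

definition nilpotent_subgroup :: "('a, 'b) monoid_scheme \<Rightarrow> 'a set \<Rightarrow> bool" where
  "nilpotent_subgroup G H \<longleftrightarrow> subgroup H G \<and> (\<exists>n. lower_central G H n = {\<one>\<^bsub>G\<^esub>})"

definition finite_index :: "('a, 'b) monoid_scheme \<Rightarrow> 'a set \<Rightarrow> bool" where
  "finite_index G H \<longleftrightarrow> subgroup H G \<and> finite (rcosets\<^bsub>G\<^esub> H)"

definition virtually_nilpotent :: "('a, 'b) monoid_scheme \<Rightarrow> bool" where
  "virtually_nilpotent G \<longleftrightarrow> (\<exists>H. finite_index G H \<and> nilpotent_subgroup G H)"

definition torsion_free :: "('a, 'b) monoid_scheme \<Rightarrow> bool" where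
  "torsion_free G \<longleftrightarrow>
     (\<forall>x \<in> carrier G. \<forall>n::nat. n > 0 \<and> x [^]\<^bsub>G\<^esub> n = \<one>\<^bsub>G\<^esub> \<longrightarrow> x = \<one>\<^bsub>G\<^esub>)"

definition conj_class :: "('a, 'b) monoid_scheme \<Rightarrow> 'a \<Rightarrow> 'a set" where
  "conj_class G g = {h \<otimes>\<^bsub>G\<^esub> g \<otimes>\<^bsub>G\<^esub> inv\<^bsub>G\<^esub> h | h. h \<in> carrier G}"

definition FC_centre :: "('a, 'b) monoid_scheme \<Rightarrow> 'a set" where
  "FC_centre G = {g \<in> carrier G. finite (conj_class G g)}"

definition centre_of :: "('a, 'b) monoid_scheme \<Rightarrow> 'a set \<Rightarrow> 'a set" where
  "centre_of G N = {z \<in> N. \<forall>n \<in> N. z \<otimes>\<^bsub>G\<^esub> n = n \<otimes>\<^bsub>G\<^esub> z}"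

end

theory Submission
  imports Defs
begin
context group
begin

lemma inv_cancel_l [simp]: "x \<in> carrier G \<Longrightarrow> y \<in> carrier G \<Longrightarrow> inv x \<otimes> (x \<otimes> y) = y"
  by (simp add: m_assoc [symmetric])
lemma inv_cancel_r [simp]: "x \<in> carrier G \<Longrightarrow> y \<in> carrier G \<Longrightarrow> x \<otimes> (inv x \<otimes> y) = y"
  by (simp add: m_assoc [symmetric])

lemma conj_pow:
  assumes "g \<in> carrier G" "y \<in> carrier G"
  shows "(g \<otimes> y \<otimes> inv g) [^] (k::nat) = g \<otimes> y [^] k \<otimes> inv g"
proof (induction k)
  case 0 then show ?case using assms by simp
next
  case (Suc k)
  have "(g \<otimes> y \<otimes> inv g) [^] Suc k = (g \<otimes> y [^] k \<otimes> inv g) \<otimes> (g \<otimes> y \<otimes> inv g)" using Suc by simp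
  also have "... = g \<otimes> (y [^] k \<otimes> y) \<otimes> inv g" using assms by (simp add: m_assoc)
  finally show ?case by simp
qed

lemma conj_eq_iff:
  assumes "g \<in> carrier G" "y \<in> carrier G"
  shows "g \<otimes> y \<otimes> inv g = y \<longleftrightarrow> g \<otimes> y = y \<otimes> g"
  using assms inv_solve_right'[of y "g \<otimes> y" g] by simp

lemma conj_inj:
  assumes "a \<in> carrier G" "u \<in> carrier G" "v \<in> carrier G" "a \<otimes> u \<otimes> inv a = a \<otimes> v \<otimes> inv a"
  shows "u = v"
proof -
  have "a \<otimes> u = a \<otimes> v" using assms right_cancel[of "inv a" "a \<otimes> u" "a \<otimes> v"] by simp
  then show ?thesis using assms by simp
qed

lemma rcos_eq_iff:
  assumes "subgroup H G" "x \<in> carrier G" "y \<in> carrier G"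
  shows "H #> x = H #> y \<longleftrightarrow> x \<otimes> inv y \<in> H"
proof
  assume "H #> x = H #> y"
  then have "x \<in> H #> y" using rcos_self[OF assms(2,1)] by simp
  then show "x \<otimes> inv y \<in> H" using subgroup.rcos_module_imp[OF assms(1) is_group assms(3)] by blast
next
  assume "x \<otimes> inv y \<in> H"
  then have "x \<in> H #> y" using subgroup.rcos_module_rev[OF assms(1) is_group assms(3,2)] by blast
  then show "H #> x = H #> y" using repr_independence[OF _ assms(3,1)] by simp
qed

lemma fin_class_pow:
  assumes g: "g \<in> carrier G" and y: "y \<in> carrier G" and fin: "finite (conj_class G g)"
  shows "\<exists>k>0. y [^] k \<otimes> g = g \<otimes> y [^] (k::nat)"
proof -
  define f where "f = (\<lambda>j::nat. y [^] j \<otimes> g \<otimes> inv (y [^] j))"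
  have "range f \<subseteq> conj_class G g" unfolding f_def conj_class_def using y by auto
  then have "finite (range f)" using fin finite_subset by blast
  then have "\<not> inj f" using finite_imageD by fastforce
  then obtain i j where ij: "f i = f j" "i \<noteq> j" unfolding inj_def by blast
  have key: "\<exists>k>0. y [^] k \<otimes> g = g \<otimes> y [^] (k::nat)" if "f i = f j" "i < j" for i j
  proof -
    define k where "k = j - i"
    have jk: "y [^] j = y [^] i \<otimes> y [^] k" using that y by (simp add: k_def nat_pow_mult)
    have "f j = y [^] i \<otimes> (y [^] k \<otimes> g \<otimes> inv (y [^] k)) \<otimes> inv (y [^] i)"
      unfolding f_def jk using y g by (simp add: inv_mult_group m_assoc)
    then have "y [^] i \<otimes> g \<otimes> inv (y [^] i) = y [^] i \<otimes> (y [^] k \<otimes> g \<otimes> inv (y [^] k)) \<otimes> inv (y [^] i)"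
      using that unfolding f_def by simp
    then have "g = y [^] k \<otimes> g \<otimes> inv (y [^] k)" by (rule conj_inj[rotated 3]) (use y g in simp_all)
    then have "y [^] k \<otimes> g = g \<otimes> y [^] k" using conj_eq_iff[of "y [^] k" g] y g by simp
    moreover have "k > 0" using that k_def by simp
    ultimately show ?thesis by blast
  qed
  show ?thesis
  proof (cases "i < j")
    case True then show ?thesis using key ij by blast
  next
    case False then have "j < i" using ij by simp
    then show ?thesis using key[OF ij(1)[symmetric]] by blast
  qed
qed

lemma fin_index_pow:
  assumes H: "subgroup H G" and fin: "finite (rcosets H)" and x: "x \<in> carrier G"
  shows "\<exists>k>0. x [^] (k::nat) \<in> H"
proof -
  define f where "f = (\<lambda>j::nat. H #> x [^] j)"
  have "range f \<subseteq> rcosets H" unfolding f_def using x subgroup.subset[OF H] by (auto intro: rcosetsI)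
  then have "finite (range f)" using fin finite_subset by blast
  then have "\<not> inj f" using finite_imageD by fastforce
  then obtain i j where ij: "f i = f j" "i \<noteq> j" unfolding inj_def by blast
  have key: "\<exists>k>0. x [^] (k::nat) \<in> H" if "f i = f j" "i < j" for i j
  proof -
    define k where "k = j - i"
    have jk: "x [^] j = x [^] k \<otimes> x [^] i" using that x by (simp add: k_def nat_pow_mult)
    have "x [^] j \<otimes> inv (x [^] i) \<in> H" using that(1)[symmetric] rcos_eq_iff[OF H] x unfolding f_def by simp
    then have "x [^] k \<in> H" using x unfolding jk by (simp add: m_assoc)
    moreover have "k > 0" using that k_def by simp
    ultimately show ?thesis by blast
  qed
  show ?thesis
  proof (cases "i < j")
    case True then show ?thesis using key ij by blast
  next
    case False then have "j < i" using ij by simp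
    then show ?thesis using key[OF ij(1)[symmetric]] by blast
  qed
qed

end

context group
begin

lemma lc_sub: "subgroup H G \<Longrightarrow> lower_central G H i \<subseteq> H"
proof (induction i)
  case 0 then show ?case by simp
next
  case (Suc i)
  have "{x \<otimes> y \<otimes> inv x \<otimes> inv y | x y. x \<in> lower_central G H i \<and> y \<in> H} \<subseteq> H"
    using Suc by (auto intro!: subgroup.m_closed subgroup.m_inv_closed)
  then show ?case using generate_subgroup_incl Suc.prems by simp
qed

lemma lc_carrier: "subgroup H G \<Longrightarrow> lower_central G H i \<subseteq> carrier G"
  using lc_sub subgroup.subset by blast

lemma lc_comm:
  assumes H: "subgroup H G" and a: "a \<in> lower_central G H i" and y: "y \<in> H"
  shows "y \<otimes> a \<otimes> inv y \<otimes> inv a \<in> lower_central G H (Suc i)"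
proof -
  have ac: "a \<in> carrier G" using lc_carrier[OF H] a by blast
  have yc: "y \<in> carrier G" using subgroup.subset[OF H] y by blast
  have "a \<otimes> y \<otimes> inv a \<otimes> inv y \<in> {x \<otimes> y \<otimes> inv x \<otimes> inv y | x y. x \<in> lower_central G H i \<and> y \<in> H}"
    using a y by blast
  then have "inv (a \<otimes> y \<otimes> inv a \<otimes> inv y) \<in> lower_central G H (Suc i)"
    by (simp add: generate.inv)
  moreover have "inv (a \<otimes> y \<otimes> inv a \<otimes> inv y) = y \<otimes> a \<otimes> inv y \<otimes> inv a"
    using ac yc by (simp add: inv_mult_group m_assoc)
  ultimately show ?thesis by simp
qed

definition PA :: "'a set \<Rightarrow> 'a \<Rightarrow> bool" where
  "PA H a \<longleftrightarrow> (\<forall>z\<in>H. \<exists>k>0. z [^] (k::nat) \<otimes> a = a \<otimes> z [^] k)"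

lemma PA_mult:
  assumes Hc: "H \<subseteq> carrier G" and u: "u \<in> carrier G" and v: "v \<in> carrier G"
    and pu: "PA H u" and pv: "PA H v"
  shows "PA H (u \<otimes> v)"
  unfolding PA_def
proof
  fix z assume z: "z \<in> H"
  then have zc: "z \<in> carrier G" using Hc by blast
  obtain k1 where k1: "k1 > 0" "z [^] k1 \<otimes> u = u \<otimes> z [^] (k1::nat)" using pu z unfolding PA_def by blast
  obtain k2 where k2: "k2 > 0" "z [^] k2 \<otimes> v = v \<otimes> z [^] (k2::nat)" using pv z unfolding PA_def by blast
  have e1: "z [^] (k1 * k2) \<otimes> u = u \<otimes> z [^] (k1 * k2)"
    using group_commutes_pow[OF k1(2), of k2] zc u by (simp add: nat_pow_pow)
  have e2: "z [^] (k1 * k2) \<otimes> v = v \<otimes> z [^] (k1 * k2)"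
    using group_commutes_pow[OF k2(2), of k1] zc v by (simp add: nat_pow_pow mult.commute)
  have "z [^] (k1 * k2) \<otimes> (u \<otimes> v) = u \<otimes> (z [^] (k1 * k2) \<otimes> v)"
    using e1 zc u v by (simp add: m_assoc[symmetric])
  also have "... = (u \<otimes> v) \<otimes> z [^] (k1 * k2)" using e2 zc u v by (simp add: m_assoc)
  finally show "\<exists>k>0. z [^] (k::nat) \<otimes> (u \<otimes> v) = (u \<otimes> v) \<otimes> z [^] k"
    using k1 k2 by (intro exI[of _ "k1 * k2"]) simp
qed

lemma comm_inv:
  assumes "w \<in> carrier G" "u \<in> carrier G" "w \<otimes> u = u \<otimes> w"
  shows "w \<otimes> inv u = inv u \<otimes> w"
proof -
  have "inv u \<otimes> (w \<otimes> u) \<otimes> inv u = inv u \<otimes> (u \<otimes> w) \<otimes> inv u" using assms by simp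
  then have "inv u \<otimes> w = w \<otimes> inv u" using assms(1,2) by (simp add: m_assoc)
  then show ?thesis by simp
qed

lemma PA_inv:
  assumes Hc: "H \<subseteq> carrier G" and u: "u \<in> carrier G" and pu: "PA H u"
  shows "PA H (inv u)"
  unfolding PA_def
proof
  fix z assume z: "z \<in> H"
  obtain k where k: "k > 0" "z [^] k \<otimes> u = u \<otimes> z [^] (k::nat)" using pu z unfolding PA_def by blast
  then show "\<exists>k>0. z [^] (k::nat) \<otimes> inv u = inv u \<otimes> z [^] k"
    using comm_inv[OF _ u k(2)] z Hc by blast
qed

lemma PA_conj:
  assumes H: "subgroup H G" and y: "y \<in> H" and u: "u \<in> carrier G" and pu: "PA H u"
  shows "PA H (y \<otimes> u \<otimes> inv y)"
  unfolding PA_def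
proof
  fix z assume z: "z \<in> H"
  have yc: "y \<in> carrier G" and zc: "z \<in> carrier G" using subgroup.subset[OF H] y z by auto
  have z': "inv y \<otimes> z \<otimes> y \<in> H" using H y z by (simp add: subgroup.m_closed subgroup.m_inv_closed)
  obtain k where k: "k > 0" "(inv y \<otimes> z \<otimes> y) [^] k \<otimes> u = u \<otimes> (inv y \<otimes> z \<otimes> y) [^] (k::nat)"
    using pu z' unfolding PA_def by blast
  have cp: "(inv y \<otimes> z \<otimes> y) [^] k = inv y \<otimes> z [^] k \<otimes> y"
    using conj_pow[of "inv y" z k] yc zc by simp
  define w where "w = z [^] k"
  have wc: "w \<in> carrier G" using zc w_def by simp
  have kk: "inv y \<otimes> w \<otimes> y \<otimes> u = u \<otimes> (inv y \<otimes> w \<otimes> y)" using k(2) cp w_def by simp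
  have "w \<otimes> (y \<otimes> u \<otimes> inv y) = y \<otimes> ((inv y \<otimes> w \<otimes> y) \<otimes> u) \<otimes> inv y"
    using wc yc u by (simp add: m_assoc)
  also have "... = y \<otimes> (u \<otimes> (inv y \<otimes> w \<otimes> y)) \<otimes> inv y" using kk by simp
  also have "... = (y \<otimes> u \<otimes> inv y) \<otimes> w" using wc yc u by (simp add: m_assoc)
  finally show "\<exists>k>0. z [^] (k::nat) \<otimes> (y \<otimes> u \<otimes> inv y) = (y \<otimes> u \<otimes> inv y) \<otimes> z [^] k"
    using k(1) w_def by blast
qed

lemma conj_iter:
  assumes yc: "y \<in> carrier G" and ac: "a \<in> carrier G" and bc: "b \<in> carrier G"
    and yb: "y \<otimes> b = b \<otimes> y" and ya: "y \<otimes> a \<otimes> inv y = b \<otimes> a"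
  shows "y [^] (j::nat) \<otimes> a \<otimes> inv (y [^] j) = b [^] j \<otimes> a"
proof (induction j)
  case 0 then show ?case using ac by simp
next
  case (Suc j)
  have ybj: "y \<otimes> b [^] j = b [^] j \<otimes> y" using group_commutes_pow[OF yb[symmetric] bc yc] by simp
  have s2: "y [^] Suc j = y \<otimes> y [^] j" by (rule nat_pow_Suc2[OF yc])
  have "y [^] Suc j \<otimes> a \<otimes> inv (y [^] Suc j) = y \<otimes> (y [^] j \<otimes> a \<otimes> inv (y [^] j)) \<otimes> inv y"
    unfolding s2 using yc ac by (simp add: inv_mult_group m_assoc)
  also have "... = y \<otimes> (b [^] j \<otimes> a) \<otimes> inv y" using Suc by simp
  also have "... = b [^] j \<otimes> (y \<otimes> a \<otimes> inv y)"
    using ybj yc ac bc by (simp add: m_assoc[symmetric])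
  also have "... = b [^] Suc j \<otimes> a" using ya yc ac bc by (simp add: m_assoc)
  finally show ?case .
qed

lemma nil_PA_central:
  assumes tf: "\<And>x n. x \<in> carrier G \<Longrightarrow> (n::nat) > 0 \<Longrightarrow> x [^] n = \<one> \<Longrightarrow> x = \<one>"
    and H: "subgroup H G" and nil: "lower_central G H c = {\<one>}"
    and a: "a \<in> H" and pa: "PA H a"
  shows "\<forall>y\<in>H. y \<otimes> a = a \<otimes> y"
proof -
  have Hc: "H \<subseteq> carrier G" using subgroup.subset[OF H] .
  have claim: "\<forall>a \<in> lower_central G H (c - d). PA H a \<longrightarrow> (\<forall>y\<in>H. y \<otimes> a = a \<otimes> y)" for d
  proof (induction d)
    case 0 then show ?case using nil Hc by auto
  next
    case (Suc d)
    show ?case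
    proof (cases "c \<le> d")
      case True then have "c - Suc d = c - d" by simp
      then show ?thesis using Suc by simp
    next
      case False
      define i where "i = c - Suc d"
      have si: "Suc i = c - d" using False i_def by simp
      show ?thesis unfolding i_def[symmetric]
      proof (intro ballI impI)
        fix a y assume a: "a \<in> lower_central G H i" and pa: "PA H a" and y: "y \<in> H"
        have ac: "a \<in> carrier G" using lc_carrier[OF H] a by blast
        have yc: "y \<in> carrier G" using Hc y by blast
        define b where "b = y \<otimes> a \<otimes> inv y \<otimes> inv a"
        have bc: "b \<in> carrier G" using ac yc b_def by simp
        have bl: "b \<in> lower_central G H (c - d)" using lc_comm[OF H a y] si b_def by simp
        have pb: "PA H b" unfolding b_def
          using PA_mult[OF Hc _ _ PA_conj[OF H y ac pa] PA_inv[OF Hc ac pa]] ac yc by simp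
        have bcent: "\<forall>z\<in>H. z \<otimes> b = b \<otimes> z" using Suc bl pb by blast
        have ya: "y \<otimes> a \<otimes> inv y = b \<otimes> a" using ac yc b_def by (simp add: m_assoc)
        obtain k where k: "k > 0" "y [^] k \<otimes> a = a \<otimes> y [^] (k::nat)" using pa y unfolding PA_def by blast
        have "y [^] k \<otimes> a \<otimes> inv (y [^] k) = b [^] k \<otimes> a"
          using conj_iter[OF yc ac bc _ ya] bcent y by blast
        moreover have "y [^] k \<otimes> a \<otimes> inv (y [^] k) = a"
          using conj_eq_iff[of "y [^] k" a] k(2) yc ac by simp
        ultimately have "b [^] k = \<one>" using ac bc by simp
        then have "b = \<one>" using tf bc k(1) by blast
        then have "y \<otimes> a \<otimes> inv y = a" using ya ac by simp
        then show "y \<otimes> a = a \<otimes> y" using conj_eq_iff yc ac by simp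
      qed
    qed
  qed
  have "\<forall>a\<in>H. PA H a \<longrightarrow> (\<forall>y\<in>H. y \<otimes> a = a \<otimes> y)" using claim[of c] by simp
  then show ?thesis using a pa by blast
qed

end

context group
begin

lemma sub_pow: "subgroup H G \<Longrightarrow> x \<in> H \<Longrightarrow> x [^] (n::nat) \<in> H"
  by (induction n) (auto intro: subgroup.m_closed subgroup.one_closed)

lemma transfer_comm:
  assumes tf: "\<And>x n. x \<in> carrier G \<Longrightarrow> (n::nat) > 0 \<Longrightarrow> x [^] n = \<one> \<Longrightarrow> x = \<one>"
    and C: "subgroup C G" and A: "subgroup A G" and AC: "A \<subseteq> C"
    and cent: "\<And>a c. a \<in> A \<Longrightarrow> c \<in> C \<Longrightarrow> a \<otimes> c = c \<otimes> a"
    and Tfin: "finite T" and TC: "T \<subseteq> C"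
    and Tuniq: "\<And>c. c \<in> C \<Longrightarrow> \<exists>!t. t \<in> T \<and> c \<otimes> inv t \<in> A"
    and pw: "\<And>c. c \<in> C \<Longrightarrow> \<exists>k>0. c [^] (k::nat) \<in> A"
    and x: "x \<in> C" and y: "y \<in> C"
  shows "x \<otimes> y = y \<otimes> x"
proof -
  have Cc: "\<And>c. c \<in> C \<Longrightarrow> c \<in> carrier G" using subgroup.subset[OF C] by blast
  have Ac: "\<And>c. c \<in> A \<Longrightarrow> c \<in> carrier G" using subgroup.subset[OF A] by blast
  have Cm: "\<And>a b. a \<in> C \<Longrightarrow> b \<in> C \<Longrightarrow> a \<otimes> b \<in> C" using subgroup.m_closed[OF C] by blast
  have Ci: "\<And>a. a \<in> C \<Longrightarrow> inv a \<in> C" using subgroup.m_inv_closed[OF C] by blast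
  have Am: "\<And>a b. a \<in> A \<Longrightarrow> b \<in> A \<Longrightarrow> a \<otimes> b \<in> A" using subgroup.m_closed[OF A] by blast
  define rep where "rep c = (THE t. t \<in> T \<and> c \<otimes> inv t \<in> A)" for c
  have rep_prop: "rep c \<in> T \<and> c \<otimes> inv (rep c) \<in> A" if "c \<in> C" for c
    unfolding rep_def using theI'[OF Tuniq[OF that]] .
  have rep_eq: "rep c = t" if "c \<in> C" "t \<in> T" "c \<otimes> inv t \<in> A" for c t
    unfolding rep_def using the1_equality[OF Tuniq[OF that(1)]] that by blast
  define Ag where "Ag = G\<lparr>carrier := A\<rparr>"
  have gA: "group Ag" unfolding Ag_def using subgroup_imp_group[OF A] .
  have cgA: "comm_group Ag"
    by (rule group.group_comm_groupI[OF gA]) (auto simp: Ag_def intro: cent AC[THEN subsetD])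
  interpret Ag: comm_group Ag by (rule cgA)
  have multA [simp]: "monoid.mult Ag = monoid.mult G" unfolding Ag_def by simp
  have carA [simp]: "carrier Ag = A" unfolding Ag_def by simp
  have oneA [simp]: "monoid.one Ag = monoid.one G" unfolding Ag_def by simp
  define fac where "fac c t = t \<otimes> c \<otimes> inv (rep (t \<otimes> c))" for c t
  have fac_A: "fac c t \<in> A" if "c \<in> C" "t \<in> T" for c t
    unfolding fac_def using rep_prop[of "t \<otimes> c"] that TC Cm by blast
  define V where "V c = finprod Ag (fac c) T" for c
  have V_A: "V c \<in> A" if "c \<in> C" for c
    unfolding V_def using Ag.finprod_closed[of "fac c" T] fac_A[OF that] by (simp add: Pi_def)
  have V_mult: "V (c \<otimes> d) = V c \<otimes> V d" if c: "c \<in> C" and d: "d \<in> C" for c d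
  proof -
    define \<sigma> where "\<sigma> t = rep (t \<otimes> c)" for t
    have \<sigma>T: "\<sigma> t \<in> T" if "t \<in> T" for t unfolding \<sigma>_def using rep_prop[of "t \<otimes> c"] that TC Cm c by blast
    have split: "fac (c \<otimes> d) t = fac c t \<otimes> fac d (\<sigma> t)" if t: "t \<in> T" for t
    proof -
      define s where "s = \<sigma> t"
      define r where "r = rep (s \<otimes> d)"
      have tC: "t \<in> C" using t TC by blast
      have sT: "s \<in> T" using \<sigma>T t s_def by simp
      have sC: "s \<in> C" using sT TC by blast
      have rT: "r \<in> T" and rA: "s \<otimes> d \<otimes> inv r \<in> A" using rep_prop[of "s \<otimes> d"] r_def sC d Cm by auto
      have rC: "r \<in> C" using rT TC by blast
      have sA: "t \<otimes> c \<otimes> inv s \<in> A" using rep_prop[of "t \<otimes> c"] s_def \<sigma>_def tC c Cm by auto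
      have eq: "t \<otimes> (c \<otimes> d) \<otimes> inv r = (t \<otimes> c \<otimes> inv s) \<otimes> (s \<otimes> d \<otimes> inv r)"
        using Cc[OF tC] Cc[OF c] Cc[OF d] Cc[OF sC] Cc[OF rC] by (simp add: m_assoc)
      have "rep (t \<otimes> (c \<otimes> d)) = r"
        by (rule rep_eq) (use tC c d Cm rT eq Am[OF sA rA] in auto)
      then show ?thesis unfolding fac_def using eq s_def r_def \<sigma>_def by simp
    qed
    have inj: "inj_on \<sigma> T"
    proof (rule inj_onI)
      fix t t' assume t: "t \<in> T" and t': "t' \<in> T" and e: "\<sigma> t = \<sigma> t'"
      define s where "s = \<sigma> t"
      have tC: "t \<in> C" and t'C: "t' \<in> C" using t t' TC by auto
      have sC: "s \<in> C" using \<sigma>T t s_def TC by blast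
      have a1: "t \<otimes> c \<otimes> inv s \<in> A" using rep_prop[of "t \<otimes> c"] s_def \<sigma>_def tC c Cm by auto
      have a2: "t' \<otimes> c \<otimes> inv s \<in> A" using rep_prop[of "t' \<otimes> c"] s_def e \<sigma>_def t'C c Cm by auto
      have "(t \<otimes> c \<otimes> inv s) \<otimes> inv (t' \<otimes> c \<otimes> inv s) \<in> A"
        using a1 a2 Am subgroup.m_inv_closed[OF A] by blast
      moreover have "(t \<otimes> c \<otimes> inv s) \<otimes> inv (t' \<otimes> c \<otimes> inv s) = t \<otimes> inv t'"
        using Cc[OF tC] Cc[OF t'C] Cc[OF c] Cc[OF sC] by (simp add: m_assoc inv_mult_group)
      ultimately have "t \<otimes> inv t' \<in> A" by simp
      moreover have "t \<otimes> inv t \<in> A" using Cc[OF tC] subgroup.one_closed[OF A] by simp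
      ultimately show "t = t'" using Tuniq[OF tC] t t' by blast
    qed
    have img: "\<sigma> ` T = T"
      using inj \<sigma>T Tfin by (meson card_image card_subset_eq image_subsetI)
    have "V (c \<otimes> d) = finprod Ag (\<lambda>t. fac c t \<otimes>\<^bsub>Ag\<^esub> fac d (\<sigma> t)) T"
      unfolding V_def using split by (intro Ag.finprod_cong') (auto simp: Pi_def fac_A \<sigma>T c d intro!: Am)
    also have "... = V c \<otimes>\<^bsub>Ag\<^esub> finprod Ag (\<lambda>t. fac d (\<sigma> t)) T"
      unfolding V_def by (rule Ag.finprod_multf) (auto simp: Pi_def fac_A \<sigma>T c d)
    also have "finprod Ag (\<lambda>t. fac d (\<sigma> t)) T = finprod Ag (fac d) (\<sigma> ` T)"
      by (rule Ag.finprod_reindex[symmetric]) (auto simp: Pi_def fac_A \<sigma>T d inj)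
    also have "... = V d" unfolding V_def img ..
    finally show ?thesis by simp
  qed
  have V_A_elem: "V z = z [^] card T" if z: "z \<in> A" for z
  proof -
    have zC: "z \<in> C" using z AC by blast
    have "fac z t = z" if t: "t \<in> T" for t
    proof -
      have tC: "t \<in> C" using t TC by blast
      have e: "t \<otimes> z \<otimes> inv t = z"
        using conj_eq_iff[of t z] cent[OF z tC] Cc[OF tC] Ac[OF z] by simp
      have "rep (t \<otimes> z) = t" by (rule rep_eq) (use tC zC Cm t e z in auto)
      then show ?thesis unfolding fac_def using e by simp
    qed
    then have "V z = finprod Ag (\<lambda>t. z) T" unfolding V_def
      by (intro Ag.finprod_cong') (auto simp: z)
    also have "... = z [^]\<^bsub>Ag\<^esub> card T" using Ag.finprod_const z by simp
    also have "... = z [^] card T" unfolding Ag_def using nat_pow_consistent by simp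
    finally show ?thesis .
  qed
  have xc: "x \<in> carrier G" and yc: "y \<in> carrier G" using Cc x y by auto
  define e where "e = x \<otimes> y \<otimes> inv x \<otimes> inv y"
  have eC: "e \<in> C" unfolding e_def using x y Cm Ci by simp
  have ec: "e \<in> carrier G" using Cc eC by blast
  have xye: "x \<otimes> y = e \<otimes> (y \<otimes> x)" unfolding e_def using xc yc by (simp add: m_assoc)
  have "V (x \<otimes> y) = V (y \<otimes> x)"
  proof -
    have "V y \<in> C" using V_A[OF y] AC by blast
    then have "V x \<otimes> V y = V y \<otimes> V x" using cent[OF V_A[OF x]] by blast
    then show ?thesis using V_mult x y by simp
  qed
  then have "V e \<otimes> V (y \<otimes> x) = V (y \<otimes> x)" using V_mult[OF eC Cm[OF y x]] xye by simp
  then have Ve: "V e = \<one>" using Ac[OF V_A[OF eC]] Ac[OF V_A[OF Cm[OF y x]]] by simp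
  have Vej: "V (e [^] j) = \<one>" for j :: nat
  proof (induction j)
    case 0
    have "V \<one> = \<one> [^] card T" using V_A_elem subgroup.one_closed[OF A] by blast
    then show ?case by simp
  next
    case (Suc j)
    have "V (e [^] Suc j) = V (e [^] j) \<otimes> V e" using V_mult[OF sub_pow[OF C eC] eC] by simp
    then show ?case using Suc Ve by simp
  qed
  obtain k where k: "k > 0" "e [^] (k::nat) \<in> A" using pw[OF eC] by blast
  have "T \<noteq> {}" using rep_prop[OF subgroup.one_closed[OF C]] by blast
  then have cT: "card T > 0" using Tfin by (simp add: card_gt_0_iff)
  have "(e [^] k) [^] card T = \<one>" using V_A_elem[OF k(2)] Vej[of k] by simp
  then have "e [^] (k * card T) = \<one>" using ec by (simp add: nat_pow_pow)
  moreover have "k * card T > 0" using k(1) cT by simp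
  ultimately have "e = \<one>" using tf[OF ec] by blast
  then show ?thesis using xye yc xc by simp
qed

end

context group
begin

lemma fc_centralizes:
  assumes tf: "\<And>x n. x \<in> carrier G \<Longrightarrow> (n::nat) > 0 \<Longrightarrow> x [^] n = \<one> \<Longrightarrow> x = \<one>"
    and Nn: "N \<lhd> G" and nil: "lower_central G N c = {\<one>}"
    and g: "g \<in> carrier G" and pg: "PA N g" and y: "y \<in> N"
  shows "g \<otimes> y = y \<otimes> g"
proof -
  have NS: "subgroup N G" using normal_imp_subgroup[OF Nn] .
  have Nc: "N \<subseteq> carrier G" using subgroup.subset[OF NS] .
  have yc: "y \<in> carrier G" using y Nc by blast
  define b where "b = y \<otimes> g \<otimes> inv y \<otimes> inv g"
  have bc: "b \<in> carrier G" unfolding b_def using yc g by simp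
  have "g \<otimes> inv y \<otimes> inv g \<in> N"
    using Nn g subgroup.m_inv_closed[OF NS y] unfolding normal_inv_iff by blast
  then have "y \<otimes> (g \<otimes> inv y \<otimes> inv g) \<in> N" using subgroup.m_closed[OF NS y] by blast
  then have bN: "b \<in> N" unfolding b_def using yc g by (simp add: m_assoc)
  have pb: "PA N b" unfolding b_def
    using PA_mult[OF Nc _ _ PA_conj[OF NS y g pg] PA_inv[OF Nc g pg]] yc g by simp
  have bcent: "\<forall>z\<in>N. z \<otimes> b = b \<otimes> z" using nil_PA_central[OF tf NS nil bN pb] .
  have ya: "y \<otimes> g \<otimes> inv y = b \<otimes> g" using g yc b_def by (simp add: m_assoc)
  obtain k where k: "k > 0" "y [^] k \<otimes> g = g \<otimes> y [^] (k::nat)" using pg y unfolding PA_def by blast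
  have "y [^] k \<otimes> g \<otimes> inv (y [^] k) = b [^] k \<otimes> g"
    using conj_iter[OF yc g bc _ ya] bcent y by blast
  moreover have "y [^] k \<otimes> g \<otimes> inv (y [^] k) = g"
    using conj_eq_iff[of "y [^] k" g] k(2) yc g by simp
  ultimately have "b [^] k = \<one>" using g bc by simp
  then have "b = \<one>" using tf bc k(1) by blast
  then have "y \<otimes> g \<otimes> inv y = g" using ya g by simp
  then show "g \<otimes> y = y \<otimes> g" using conj_eq_iff yc g by simp
qed

lemma comm_cancel:
  assumes ac: "a \<in> carrier G" and nc: "n \<in> carrier G" and cc: "c \<in> carrier G" and c'c: "c' \<in> carrier G"
    and cn: "c \<otimes> n = n \<otimes> c" and cc': "c \<otimes> c' = c' \<otimes> c" and c'a: "c' \<otimes> a = a \<otimes> c'"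
  shows "(a \<otimes> c) \<otimes> (n \<otimes> c') \<otimes> inv (a \<otimes> c) \<otimes> inv (n \<otimes> c') = a \<otimes> n \<otimes> inv a \<otimes> inv n"
proof -
  have 1: "c \<otimes> (n \<otimes> c') = (n \<otimes> c') \<otimes> c"
  proof -
    have "c \<otimes> (n \<otimes> c') = (c \<otimes> n) \<otimes> c'" using ac nc cc c'c by (simp add: m_assoc)
    also have "... = n \<otimes> (c \<otimes> c')" using cn nc cc c'c by (simp add: m_assoc)
    also have "... = (n \<otimes> c') \<otimes> c" using cc' nc cc c'c by (simp add: m_assoc)
    finally show ?thesis .
  qed
  have 2: "c' \<otimes> inv a = inv a \<otimes> c'" using comm_inv[OF c'c ac c'a] .
  have "(a \<otimes> c) \<otimes> (n \<otimes> c') \<otimes> inv (a \<otimes> c) \<otimes> inv (n \<otimes> c')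
      = a \<otimes> ((c \<otimes> (n \<otimes> c')) \<otimes> (inv c \<otimes> (inv a \<otimes> (inv c' \<otimes> inv n))))"
    using ac nc cc c'c by (simp add: m_assoc inv_mult_group)
  also have "... = a \<otimes> (((n \<otimes> c') \<otimes> c) \<otimes> (inv c \<otimes> (inv a \<otimes> (inv c' \<otimes> inv n))))"
    using 1 by simp
  also have "... = a \<otimes> (n \<otimes> ((c' \<otimes> inv a) \<otimes> (inv c' \<otimes> inv n)))"
    using ac nc cc c'c by (simp add: m_assoc)
  also have "... = a \<otimes> (n \<otimes> ((inv a \<otimes> c') \<otimes> (inv c' \<otimes> inv n)))"
    using 2 by simp
  also have "... = a \<otimes> n \<otimes> inv a \<otimes> inv n"
    using ac nc cc c'c by (simp add: m_assoc)
  finally show ?thesis .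
qed

lemma conj_comm:
  assumes hc: "h \<in> carrier G" and cc: "c \<in> carrier G" and nc: "n \<in> carrier G"
    and e: "c \<otimes> (inv h \<otimes> n \<otimes> h) = (inv h \<otimes> n \<otimes> h) \<otimes> c"
  shows "(h \<otimes> c \<otimes> inv h) \<otimes> n = n \<otimes> (h \<otimes> c \<otimes> inv h)"
proof -
  have "(h \<otimes> c \<otimes> inv h) \<otimes> n = h \<otimes> (c \<otimes> (inv h \<otimes> n \<otimes> h)) \<otimes> inv h"
    using hc cc nc by (simp add: m_assoc)
  also have "... = h \<otimes> ((inv h \<otimes> n \<otimes> h) \<otimes> c) \<otimes> inv h" using e by simp
  also have "... = n \<otimes> (h \<otimes> c \<otimes> inv h)" using hc cc nc by (simp add: m_assoc)
  finally show ?thesis .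
qed

end

theorem lemma3p2:
  fixes G (structure) and N :: "'a set"
  assumes "group G"
    and "torsion_free G"
    and "virtually_nilpotent G"
    and "N \<lhd> G" and "finite_index G N" and "nilpotent_subgroup G N"
    and "\<And>M. \<lbrakk>M \<lhd> G; finite_index G M; nilpotent_subgroup G M; N \<subseteq> M\<rbrakk> \<Longrightarrow> M = N"
  shows "(\<forall>g \<in> carrier G. finite (conj_class G g) \<longrightarrow> conj_class G g \<subseteq> centre_of G N)
         \<and> FC_centre G = centre_of G N"
proof -
  interpret group G by (rule assms(1))
  have tf: "\<And>x n. x \<in> carrier G \<Longrightarrow> (n::nat) > 0 \<Longrightarrow> x [^] n = \<one> \<Longrightarrow> x = \<one>"
    using assms(2) unfolding torsion_free_def by blast
  have Nn: "N \<lhd> G" by (rule assms(4))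
  have NS: "subgroup N G" using normal_imp_subgroup[OF Nn] .
  have Nc: "N \<subseteq> carrier G" using subgroup.subset[OF NS] .
  have Nconj: "\<And>h n. h \<in> carrier G \<Longrightarrow> n \<in> N \<Longrightarrow> h \<otimes> n \<otimes> inv h \<in> N"
    using Nn unfolding normal_inv_iff by blast
  have Nm: "\<And>a b. a \<in> N \<Longrightarrow> b \<in> N \<Longrightarrow> a \<otimes> b \<in> N" using subgroup.m_closed[OF NS] by blast
  have Ni: "\<And>a. a \<in> N \<Longrightarrow> inv a \<in> N" using subgroup.m_inv_closed[OF NS] by blast
  obtain c where nil: "lower_central G N c = {\<one>}"
    using assms(6) unfolding nilpotent_subgroup_def by blast
  have finN: "finite (rcosets N)" using assms(5) unfolding finite_index_def by blast
  define C where "C = {x \<in> carrier G. \<forall>n\<in>N. x \<otimes> n = n \<otimes> x}"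
  have Cc: "C \<subseteq> carrier G" unfolding C_def by blast
  have CS: "subgroup C G"
  proof (rule subgroupI)
    show "C \<subseteq> carrier G" by (rule Cc)
    show "C \<noteq> {}" unfolding C_def using Nc by force
  next
    fix a assume a: "a \<in> C"
    then show "inv a \<in> C" unfolding C_def using comm_inv Nc by force
  next
    fix a b assume a: "a \<in> C" and b: "b \<in> C"
    show "a \<otimes> b \<in> C" unfolding C_def
    proof (intro CollectI conjI ballI)
      show "a \<otimes> b \<in> carrier G" using a b Cc by blast
      fix n assume n: "n \<in> N"
      have ac: "a \<in> carrier G" and bc: "b \<in> carrier G" and nc: "n \<in> carrier G" using a b n Cc Nc by auto
      have "a \<otimes> b \<otimes> n = a \<otimes> (b \<otimes> n)" using ac bc nc by (simp add: m_assoc)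
      also have "... = a \<otimes> (n \<otimes> b)" using b n unfolding C_def by simp
      also have "... = (a \<otimes> n) \<otimes> b" using ac bc nc by (simp add: m_assoc)
      also have "... = (n \<otimes> a) \<otimes> b" using a n unfolding C_def by simp
      also have "... = n \<otimes> (a \<otimes> b)" using ac bc nc by (simp add: m_assoc)
      finally show "a \<otimes> b \<otimes> n = n \<otimes> (a \<otimes> b)" .
    qed
  qed
  have Cm: "\<And>a b. a \<in> C \<Longrightarrow> b \<in> C \<Longrightarrow> a \<otimes> b \<in> C" using subgroup.m_closed[OF CS] by blast
  have Ci: "\<And>a. a \<in> C \<Longrightarrow> inv a \<in> C" using subgroup.m_inv_closed[OF CS] by blast
  have Ccomm: "\<And>x n. x \<in> C \<Longrightarrow> n \<in> N \<Longrightarrow> x \<otimes> n = n \<otimes> x" unfolding C_def by blast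
  have Cconj: "h \<otimes> x \<otimes> inv h \<in> C" if h: "h \<in> carrier G" and x: "x \<in> C" for h x
    unfolding C_def
  proof (intro CollectI conjI ballI)
    show "h \<otimes> x \<otimes> inv h \<in> carrier G" using h x Cc by blast
    fix n assume n: "n \<in> N"
    have "inv h \<otimes> n \<otimes> inv (inv h) \<in> N" using Nconj[of "inv h" n] h n by simp
    then have "inv h \<otimes> n \<otimes> h \<in> N" using h by simp
    then have "x \<otimes> (inv h \<otimes> n \<otimes> h) = (inv h \<otimes> n \<otimes> h) \<otimes> x" using Ccomm x by blast
    then show "h \<otimes> x \<otimes> inv h \<otimes> n = n \<otimes> (h \<otimes> x \<otimes> inv h)"
      using conj_comm h x n Cc Nc by blast
  qed
  have fcC: "g \<in> C" if g: "g \<in> carrier G" and fin: "finite (conj_class G g)" for g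
  proof -
    have pg: "PA N g" unfolding PA_def using fin_class_pow[OF g _ fin] Nc by blast
    have "g \<otimes> y = y \<otimes> g" if "y \<in> N" for y using fc_centralizes[OF tf Nn nil g pg that] .
    then show ?thesis unfolding C_def using g by blast
  qed
  define A where "A = C \<inter> N"
  have AS: "subgroup A G" unfolding A_def using subgroups_Inter_pair[OF CS NS] .
  define R where "R = {N #> x | x. x \<in> C}"
  define pick where "pick Q = (SOME x. x \<in> C \<and> N #> x = Q)" for Q
  have pick_prop: "pick Q \<in> C \<and> N #> pick Q = Q" if "Q \<in> R" for Q
  proof -
    have "\<exists>x. x \<in> C \<and> N #> x = Q" using that unfolding R_def by blast
    then show ?thesis unfolding pick_def by (rule someI_ex)
  qed
  define T where "T = pick ` R"
  have RN: "R \<subseteq> rcosets N" unfolding R_def using Cc Nc by (auto intro: rcosetsI)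
  have Tfin: "finite T" unfolding T_def using finite_subset[OF RN finN] by simp
  have TC: "T \<subseteq> C" unfolding T_def using pick_prop by blast
  have Tuniq: "\<exists>!t. t \<in> T \<and> x \<otimes> inv t \<in> A" if x: "x \<in> C" for x
  proof (rule ex1I)
    define t where "t = pick (N #> x)"
    have QR: "N #> x \<in> R" unfolding R_def using x by blast
    have tC: "t \<in> C" and tx: "N #> t = N #> x" using pick_prop[OF QR] t_def by auto
    have "x \<otimes> inv t \<in> N" using rcos_eq_iff[OF NS, of x t] tx x tC Cc by auto
    moreover have "x \<otimes> inv t \<in> C" using x tC Cm Ci by blast
    ultimately show "t \<in> T \<and> x \<otimes> inv t \<in> A" unfolding A_def T_def t_def using QR by blast
    fix t' assume t': "t' \<in> T \<and> x \<otimes> inv t' \<in> A"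
    then obtain Q2 where Q2: "Q2 \<in> R" "t' = pick Q2" unfolding T_def by blast
    have t'C: "t' \<in> C" and t'Q: "N #> t' = Q2" using pick_prop[OF Q2(1)] Q2(2) by auto
    have "x \<otimes> inv t' \<in> N" using t' unfolding A_def by blast
    then have "N #> x = N #> t'" using rcos_eq_iff[OF NS, of x t'] x t'C Cc by auto
    then show "t' = t" unfolding t_def using Q2 t'Q by simp
  qed
  have pw: "\<exists>k>0. x [^] (k::nat) \<in> A" if x: "x \<in> C" for x
  proof -
    obtain k where k: "k > 0" "x [^] (k::nat) \<in> N" using fin_index_pow[OF NS finN] x Cc by blast
    then show ?thesis unfolding A_def using sub_pow[OF CS x] by blast
  qed
  have Cab: "x \<otimes> y = y \<otimes> x" if x: "x \<in> C" and y: "y \<in> C" for x y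
    by (rule transfer_comm[OF tf CS AS _ _ Tfin TC Tuniq pw x y])
       (auto simp: A_def dest: Ccomm)
  define M where "M = {n \<otimes> x | n x. n \<in> N \<and> x \<in> C}"
  have Mc: "M \<subseteq> carrier G" unfolding M_def using Nc Cc by blast
  have NM: "N \<subseteq> M" unfolding M_def
  proof
    fix n assume "n \<in> N"
    then have "n = n \<otimes> \<one> \<and> n \<in> N \<and> \<one> \<in> C" using Nc subgroup.one_closed[OF CS] by auto
    then show "n \<in> {n \<otimes> x | n x. n \<in> N \<and> x \<in> C}" by blast
  qed
  have CM: "C \<subseteq> M" unfolding M_def
  proof
    fix x assume "x \<in> C"
    then have "x = \<one> \<otimes> x \<and> \<one> \<in> N \<and> x \<in> C" using Cc subgroup.one_closed[OF NS] by auto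
    then show "x \<in> {n \<otimes> x | n x. n \<in> N \<and> x \<in> C}" by blast
  qed
  have MS: "subgroup M G"
  proof (rule subgroupI)
    show "M \<subseteq> carrier G" by (rule Mc)
    show "M \<noteq> {}" using NM subgroup.one_closed[OF NS] by blast
  next
    fix a assume "a \<in> M"
    then obtain n x where nx: "a = n \<otimes> x" "n \<in> N" "x \<in> C" unfolding M_def by blast
    have nc: "n \<in> carrier G" and xc: "x \<in> carrier G" using nx Nc Cc by auto
    have "inv a = inv x \<otimes> inv n" using nx nc xc by (simp add: inv_mult_group)
    also have "... = inv n \<otimes> inv x" using Ccomm[OF Ci[OF nx(3)] Ni[OF nx(2)]] .
    finally show "inv a \<in> M" unfolding M_def using Ni[OF nx(2)] Ci[OF nx(3)] by blast
  next
    fix a b assume "a \<in> M" "b \<in> M"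
    then obtain n x n' x' where nx: "a = n \<otimes> x" "n \<in> N" "x \<in> C" "b = n' \<otimes> x'" "n' \<in> N" "x' \<in> C"
      unfolding M_def by blast
    have c: "n \<in> carrier G" "x \<in> carrier G" "n' \<in> carrier G" "x' \<in> carrier G" using nx Nc Cc by auto
    have "a \<otimes> b = n \<otimes> (x \<otimes> n') \<otimes> x'" using nx c by (simp add: m_assoc)
    also have "... = n \<otimes> (n' \<otimes> x) \<otimes> x'" using Ccomm[OF nx(3) nx(5)] by simp
    also have "... = (n \<otimes> n') \<otimes> (x \<otimes> x')" using c by (simp add: m_assoc)
    finally show "a \<otimes> b \<in> M" unfolding M_def using Nm[OF nx(2) nx(5)] Cm[OF nx(3) nx(6)] by blast
  qed
  have Mn: "M \<lhd> G" unfolding normal_inv_iff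
  proof (intro conjI MS ballI)
    fix h a assume h: "h \<in> carrier G" and "a \<in> M"
    then obtain n x where nx: "a = n \<otimes> x" "n \<in> N" "x \<in> C" unfolding M_def by blast
    have nc: "n \<in> carrier G" and xc: "x \<in> carrier G" using nx Nc Cc by auto
    have "h \<otimes> a \<otimes> inv h = (h \<otimes> n \<otimes> inv h) \<otimes> (h \<otimes> x \<otimes> inv h)"
      using nx h nc xc by (simp add: m_assoc)
    then show "h \<otimes> a \<otimes> inv h \<in> M" unfolding M_def using Nconj[OF h nx(2)] Cconj[OF h nx(3)] by blast
  qed
  define pick' where "pick' Q = (SOME g. g \<in> carrier G \<and> N #> g = Q)" for Q
  have pick'_prop: "pick' Q \<in> carrier G \<and> N #> pick' Q = Q" if "Q \<in> rcosets N" for Q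
  proof -
    have "\<exists>g. g \<in> carrier G \<and> N #> g = Q" using that unfolding RCOSETS_def by blast
    then show ?thesis unfolding pick'_def by (rule someI_ex)
  qed
  have Mfin: "finite_index G M" unfolding finite_index_def
  proof (intro conjI MS)
    have "rcosets M \<subseteq> (\<lambda>Q. M #> pick' Q) ` (rcosets N)"
    proof
      fix Y assume "Y \<in> rcosets M"
      then obtain g where g: "g \<in> carrier G" "Y = M #> g" unfolding RCOSETS_def by blast
      have QN: "N #> g \<in> rcosets N" using g Nc by (simp add: rcosetsI)
      define g' where "g' = pick' (N #> g)"
      have g'c: "g' \<in> carrier G" and g'N: "N #> g' = N #> g" using pick'_prop[OF QN] g'_def by auto
      have "g' \<otimes> inv g \<in> N" using rcos_eq_iff[OF NS g'c g(1)] g'N by simp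
      then have "M #> g' = M #> g" using rcos_eq_iff[OF MS g'c g(1)] NM by blast
      then show "Y \<in> (\<lambda>Q. M #> pick' Q) ` (rcosets N)" using QN g g'_def by auto
    qed
    then show "finite (rcosets M)" using finN finite_surj by blast
  qed
  have sub: "{x \<otimes> y \<otimes> inv x \<otimes> inv y | x y. x \<in> lower_central G M i \<and> y \<in> M}
        \<subseteq> {x \<otimes> y \<otimes> inv x \<otimes> inv y | x y. x \<in> lower_central G N i \<and> y \<in> N}"
    if IH: "\<forall>z \<in> lower_central G M i. \<exists>a \<in> lower_central G N i. \<exists>x\<in>C. z = a \<otimes> x" for i
  proof
    fix w assume "w \<in> {x \<otimes> y \<otimes> inv x \<otimes> inv y | x y. x \<in> lower_central G M i \<and> y \<in> M}"
    then obtain u v where uv: "w = u \<otimes> v \<otimes> inv u \<otimes> inv v" "u \<in> lower_central G M i" "v \<in> M" by blast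
    obtain a x where ax: "a \<in> lower_central G N i" "x \<in> C" "u = a \<otimes> x" using IH uv(2) by blast
    obtain n x' where nx: "n \<in> N" "x' \<in> C" "v = n \<otimes> x'" using uv(3) unfolding M_def by blast
    have aN: "a \<in> N" using lc_sub[OF NS] ax(1) by blast
    have "w = a \<otimes> n \<otimes> inv a \<otimes> inv n"
      unfolding uv(1) ax(3) nx(3)
      by (rule comm_cancel) (use aN ax nx Nc Cc Ccomm Cab in auto)
    then show "w \<in> {x \<otimes> y \<otimes> inv x \<otimes> inv y | x y. x \<in> lower_central G N i \<and> y \<in> N}"
      using ax(1) nx(1) by blast
  qed
  have lcM: "\<forall>z \<in> lower_central G M i. \<exists>a \<in> lower_central G N i. \<exists>x\<in>C. z = a \<otimes> x" for i
  proof (induction i)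
    case 0 then show ?case unfolding M_def by auto
  next
    case (Suc i)
    show ?case
    proof
      fix z assume "z \<in> lower_central G M (Suc i)"
      then have zN: "z \<in> lower_central G N (Suc i)" using mono_generate[OF sub[OF Suc]] by auto
      then have "z \<in> carrier G" using lc_carrier[OF NS, of "Suc i"] by blast
      then have "z = z \<otimes> \<one>" by simp
      then show "\<exists>a \<in> lower_central G N (Suc i). \<exists>x\<in>C. z = a \<otimes> x"
        using zN subgroup.one_closed[OF CS] by blast
    qed
  qed
  have lcMsub: "lower_central G M (Suc i) \<subseteq> lower_central G N (Suc i)" for i
    using mono_generate[OF sub[OF lcM[of i]]] by simp
  have Mnil: "nilpotent_subgroup G M" unfolding nilpotent_subgroup_def
  proof (intro conjI MS exI)
    have gN: "lower_central G N (Suc c) \<subseteq> {\<one>}"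
    proof -
      have "{x \<otimes> y \<otimes> inv x \<otimes> inv y | x y. x \<in> lower_central G N c \<and> y \<in> N} \<subseteq> {\<one>}"
        using nil Nc by auto
      then show ?thesis using generate_subgroup_incl[OF _ triv_subgroup] by simp
    qed
    show "lower_central G M (Suc c) = {\<one>}"
    proof
      show "lower_central G M (Suc c) \<subseteq> {\<one>}"
      proof
        fix z assume "z \<in> lower_central G M (Suc c)"
        then show "z \<in> {\<one>}" using lcMsub gN by blast
      qed
      show "{\<one>} \<subseteq> lower_central G M (Suc c)" by (simp add: generate.one)
    qed
  qed
  have MN: "M = N" using assms(7)[OF Mn Mfin Mnil NM] .
  have CN: "C \<subseteq> N" using CM MN by simp
  have gcent: "x \<in> centre_of G N" if "x \<in> C" for x
    unfolding centre_of_def using CN Ccomm that by blast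
  have part1: "\<forall>g \<in> carrier G. finite (conj_class G g) \<longrightarrow> conj_class G g \<subseteq> centre_of G N"
  proof (intro ballI impI subsetI)
    fix g w assume g: "g \<in> carrier G" and fin: "finite (conj_class G g)" and w: "w \<in> conj_class G g"
    then obtain h where h: "h \<in> carrier G" "w = h \<otimes> g \<otimes> inv h" unfolding conj_class_def by blast
    show "w \<in> centre_of G N" using gcent[OF Cconj[OF h(1) fcC[OF g fin]]] h(2) by simp
  qed
  have "FC_centre G \<subseteq> centre_of G N"
    unfolding FC_centre_def using fcC gcent by blast
  moreover have "centre_of G N \<subseteq> FC_centre G"
  proof
    fix z assume z: "z \<in> centre_of G N"
    have zN: "z \<in> N" and zc: "z \<in> carrier G" using z Nc unfolding centre_of_def by auto
    have zC: "z \<in> C" using z Nc unfolding centre_of_def C_def by auto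
    have "conj_class G z \<subseteq> (\<lambda>Q. pick' Q \<otimes> z \<otimes> inv (pick' Q)) ` (rcosets N)"
    proof
      fix w assume "w \<in> conj_class G z"
      then obtain h where h: "h \<in> carrier G" "w = h \<otimes> z \<otimes> inv h" unfolding conj_class_def by blast
      have QN: "N #> h \<in> rcosets N" using h Nc by (simp add: rcosetsI)
      define g' where "g' = pick' (N #> h)"
      have g'c: "g' \<in> carrier G" and g'N: "N #> g' = N #> h" using pick'_prop[OF QN] g'_def by auto
      define m where "m = g' \<otimes> inv h"
      have mN: "m \<in> N" using rcos_eq_iff[OF NS g'c h(1)] g'N m_def by simp
      have mc: "m \<in> carrier G" using mN Nc by blast
      have g'm: "g' = m \<otimes> h" using m_def g'c h(1) by (simp add: m_assoc)
      define v where "v = h \<otimes> z \<otimes> inv h"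
      have vC: "v \<in> C" using Cconj[OF h(1) zC] v_def by simp
      have vc: "v \<in> carrier G" using vC Cc by blast
      have "g' \<otimes> z \<otimes> inv g' = m \<otimes> v \<otimes> inv m"
        unfolding g'm v_def using mc h(1) zc by (simp add: m_assoc inv_mult_group)
      also have "... = v" using conj_eq_iff[OF mc vc] Ccomm[OF vC mN] by simp
      finally have "w = g' \<otimes> z \<otimes> inv g'" using h(2) v_def by simp
      then show "w \<in> (\<lambda>Q. pick' Q \<otimes> z \<otimes> inv (pick' Q)) ` (rcosets N)"
        using QN g'_def by blast
    qed
    then have "finite (conj_class G z)" using finN finite_surj by blast
    then show "z \<in> FC_centre G" unfolding FC_centre_def using zc by blast
  qed
  ultimately show ?thesis using part1 by blast
qed

end
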